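(* For every $\lambda>\lambda^*$, $e(\lambda)\in I_\lambda\cap(-\infty,0)$; that is, $e(\lambda)>-1/(\gamma b^* )$, $G(e(\lambda))<\lambda/a^*$, and $e(\lambda)<0$.
   Context: Standing setup. Let $\gamma>0$; let $a_1,\dots,a_p>0$ with weights $\omega_i>0$, $\sum_i\omega_i=1$, and $b_1,\dots,b_n>0$ with weights $\pi_j>0$, $\sum_j\pi_j=1$; put $a^*=\max_i a_i$, $b^*=\max_j b_j$. Let $\mu$ be the limiting spectral distribution of $\mathbf{N}\mathbf{N}^T$ where $\mathbf{N}=\mathbf{A}^{1/2}\mathbf{G}\mathbf{B}^{1/2}$ is $k\times l$, $\mathbf{G}$ has iid mean-zero entries of variance $1/l$, $k/l\to\gamma$, and the spectral distributions of $\mathbf{A},\mathbf{B}$ converge to $\nu=\sum_i\omega_i\delta_{a_i}$ and $\underline{\nu}=\sum_j\pi_j\delta_{b_j}$. $\mu$ is a compactly supported probability measure on $[0,\infty)$; $\lambda^*>0$ is the right endpoint of its support, and $s(\lambda)=\int\frac{d\mu(t)}{t-\lambda}$ for $\lambda>\lambda^*$. Define $G(e)=\sum_{j=1}^n\frac{b_j\pi_j}{1+\gamma b_j e}$, $J=\{e: e>-1/(\gamma b^* )\}$, and for $\lambda>0$, $I_\lambda=\{e\in J: G(e)<\lambda/a^*\}$. Define $F(\lambda,e)=e-\sum_{i=1}^p\frac{a_i\omega_i}{a_iG(e)-\lambda}$. It is known (master equations) that there is a continuous (indeed smooth) real function $e(\lambda)$ on $(\lambda^*,\infty)$, never equal to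 a pole $-1/(\gamma b_j)$ of $G$ and with $a_iG(e(\lambda))\ne\lambda$, satisfying $s(\lambda)=\sum_{i=1}^p\frac{\omega_i}{a_iG(e(\lambda))-\lambda}$ and $e(\lambda)=\sum_{i=1}^p\frac{a_i\omega_i}{a_iG(e(\lambda))-\lambda}$, i.e. $F(\lambda,e(\lambda))=0$. *)

theory Defs
  imports "HOL-Probability.Probability"
begin

definition msupp :: "real measure \<Rightarrow> real set" where
  "msupp M = {x. \<forall>\<epsilon>>0. measure M {x - \<epsilon><..<x + \<epsilon>} > 0}"

definition stieltjes :: "real measure \<Rightarrow> real \<Rightarrow> real" where
  "stieltjes M l = (\<integral>t. 1 / (t - l) \<partial>M)"

definition Gfun :: "real \<Rightarrow> nat \<Rightarrow> (nat \<Rightarrow> real) \<Rightarrow> (nat \<Rightarrow> real) \<Rightarrow> real \<Rightarrow> real" where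
  "Gfun \<gamma> n b \<pi> e = (\<Sum>j<n. b j * \<pi> j / (1 + \<gamma> * b j * e))"

definition Ilam :: "real \<Rightarrow> nat \<Rightarrow> (nat \<Rightarrow> real) \<Rightarrow> (nat \<Rightarrow> real) \<Rightarrow> real \<Rightarrow> real \<Rightarrow> real \<Rightarrow> real set" where
  "Ilam \<gamma> n b \<pi> astar bstar l =
     {e. e > - 1 / (\<gamma> * bstar) \<and> Gfun \<gamma> n b \<pi> e < l / astar}"

end

theory Submission
  imports Defs
begin

lemma AE_supp:
  assumes P: "prob_space M" and B: "sets M = sets borel"
  shows "AE x in M. x \<in> msupp M"
proof -
  interpret prob_space M by fact
  define F where "F = {S. \<exists>x \<epsilon>. \<epsilon>>0 \<and> S = {x-\<epsilon><..<x+\<epsilon>} \<and> measure M S = 0}"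
  have "\<And>S. S\<in>F \<Longrightarrow> open S" by (auto simp: F_def)
  then obtain F' where F': "F' \<subseteq> F" "countable F'" "\<Union>F' = \<Union>F" using Lindelof by metis
  have "AE x in M. \<forall>S\<in>F'. x \<notin> S"
  proof (subst AE_ball_countable[OF F'(2)], intro ballI)
    fix S assume "S \<in> F'"
    then obtain x \<epsilon> where S: "S = {x-\<epsilon><..<x+\<epsilon>}" "measure M S = 0" using F' F_def by auto
    have "S \<in> sets M" using B S by simp
    then have "S \<in> null_sets M" using S by (simp add: null_sets_def emeasure_eq_measure)
    then show "AE x in M. x \<notin> S" using AE_not_in by blast
  qed
  then show ?thesis
  proof (rule eventually_mono)
    fix x assume "\<forall>S\<in>F'. x\<notin>S"
    then have xF: "x \<notin> \<Union>F" using F' by auto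
    show "x \<in> msupp M"
    proof (rule ccontr)
      assume "x \<notin> msupp M"
      then obtain \<epsilon> where "\<epsilon> > 0" "\<not> measure M {x-\<epsilon><..<x+\<epsilon>} > 0" unfolding msupp_def by auto
      then have "measure M {x-\<epsilon><..<x+\<epsilon>} = 0" using measure_nonneg[of M "{x-\<epsilon><..<x+\<epsilon>}"] by linarith
      then have "{x-\<epsilon><..<x+\<epsilon>} \<in> F" using \<open>\<epsilon>>0\<close> unfolding F_def by blast
      then show False using xF \<open>\<epsilon>>0\<close> by auto
    qed
  qed
qed

lemma stieltjes_bounds:
  assumes P: "prob_space M" and B: "sets M = sets borel"
    and S0: "msupp M \<subseteq> {0..}" and Sb: "bounded (msupp M)" and T: "T = Sup (msupp M)"
    and T0: "T > 0" and l: "l > T"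
  shows "- 1 / (l - T) \<le> stieltjes M l \<and> stieltjes M l \<le> - 1 / l"
proof -
  have bdd: "bdd_above (msupp M)" by (rule bounded_imp_bdd_above[OF Sb])
  interpret prob_space M by fact
  have AE: "AE t in M. 0 \<le> t \<and> t \<le> T"
    using AE_supp[OF P B] proof (rule eventually_mono)
    fix t assume "t \<in> msupp M" then show "0 \<le> t \<and> t \<le> T"
      using S0 T cSup_upper[OF _ bdd] by auto
  qed
  have bnd: "AE t in M. - 1 / (l - T) \<le> 1 / (t - l) \<and> 1 / (t - l) \<le> - 1 / l"
    using AE proof (rule eventually_mono)
    fix t assume t: "0 \<le> t \<and> t \<le> T"
    have "- 1 / (l - T) \<le> 1 / (t - l)" using t l T0 by (simp add: divide_simps)
    moreover have "1 / (t - l) \<le> - 1 / l" using t l T0 by (simp add: divide_simps)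
    ultimately show "- 1 / (l - T) \<le> 1 / (t - l) \<and> 1 / (t - l) \<le> - 1 / l" by simp
  qed
  have meas: "(\<lambda>t. 1 / (t - l)) \<in> borel_measurable M"
    using B by (simp add: measurable_cong_sets[OF B refl] borel_measurable_divide)
  have int: "integrable M (\<lambda>t. 1 / (t - l))"
  proof (rule integrable_const_bound[where B="1 / (l - T) + 1 / l"])
    show "AE x in M. norm (1 / (x - l)) \<le> 1 / (l - T) + 1 / l"
      using bnd proof (rule eventually_mono)
      fix t assume h: "- 1 / (l - T) \<le> 1 / (t - l) \<and> 1 / (t - l) \<le> - 1 / l"
      have "0 < 1/l" "0 < 1/(l-T)" using l T0 by auto
      then show "norm (1 / (t - l)) \<le> 1 / (l - T) + 1 / l" using h unfolding real_norm_def by linarith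
    qed
  qed (fact meas)
  show ?thesis unfolding stieltjes_def
    using integral_ge_const[OF int] integral_le_const[OF int] bnd
    by (auto elim: eventually_mono)
qed

lemma sign_const:
  fixes f :: "real \<Rightarrow> real"
  assumes cont: "continuous_on {c<..} f" and nz: "\<forall>x>c. f x \<noteq> 0"
    and x: "x > c" and y: "y > c" and fx: "f x > 0"
  shows "f y > 0"
proof (rule ccontr)
  assume "\<not> f y > 0" then have fy: "f y < 0" using nz y by force
  have "\<exists>z. min x y \<le> z \<and> z \<le> max x y \<and> f z = 0"
  proof (cases "x \<le> y")
    case True
    have "continuous_on {x..y} f" by (rule continuous_on_subset[OF cont]) (use x in auto)
    then show ?thesis using IVT2'[of f y 0 x] fy fx True by auto
  next
    case False
    have "continuous_on {y..x} f" by (rule continuous_on_subset[OF cont]) (use y in auto)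
    then show ?thesis using IVT'[of f y 0 x] fy fx False by auto
  qed
  then obtain z where "min x y \<le> z" "f z = 0" by blast
  moreover have "z > c" using \<open>min x y \<le> z\<close> x y by auto
  ultimately show False using nz by auto
qed

theorem proposition3p1:
  fixes \<gamma> :: real and p n :: nat and a \<omega> b \<pi> :: "nat \<Rightarrow> real"
    and \<mu> :: "real measure" and e :: "real \<Rightarrow> real" and lstar :: real
  assumes \<gamma>_pos: "\<gamma> > 0"
    and p_pos: "p \<ge> 1" and n_pos: "n \<ge> 1"
    and a_pos: "\<forall>i<p. a i > 0" and \<omega>_pos: "\<forall>i<p. \<omega> i > 0" and \<omega>_sum: "(\<Sum>i<p. \<omega> i) = 1"
    and b_pos: "\<forall>j<n. b j > 0" and \<pi>_pos: "\<forall>j<n. \<pi> j > 0" and \<pi>_sum: "(\<Sum>j<n. \<pi> j) = 1"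
    and \<mu>_prob: "prob_space \<mu>" and \<mu>_borel: "sets \<mu> = sets borel"
    and supp_nonneg: "msupp \<mu> \<subseteq> {0..}" and supp_bdd: "bounded (msupp \<mu>)"
    and lstar_def: "lstar = Sup (msupp \<mu>)" and lstar_pos: "lstar > 0"
    and e_cont: "continuous_on {lstar<..} e"
    and e_nopole: "\<forall>l>lstar. \<forall>j<n. 1 + \<gamma> * b j * e l \<noteq> 0"
    and e_ne: "\<forall>l>lstar. \<forall>i<p. a i * Gfun \<gamma> n b \<pi> (e l) \<noteq> l"
    and s_eq: "\<forall>l>lstar. stieltjes \<mu> l = (\<Sum>i<p. \<omega> i / (a i * Gfun \<gamma> n b \<pi> (e l) - l))"
    and e_eq: "\<forall>l>lstar. e l = (\<Sum>i<p. a i * \<omega> i / (a i * Gfun \<gamma> n b \<pi> (e l) - l))"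
    and l_gt: "l > lstar"
  shows "e l \<in> Ilam \<gamma> n b \<pi> (Max (a ` {..<p})) (Max (b ` {..<n})) l \<inter> {..<0}
    \<and> e l > - 1 / (\<gamma> * Max (b ` {..<n}))
    \<and> Gfun \<gamma> n b \<pi> (e l) < l / Max (a ` {..<p})
    \<and> e l < 0"
proof -
  define A where "A = Max (a ` {..<p})"
  define B where "B = Max (b ` {..<n})"
  define T where "T = lstar"
  have pne: "{..<p} \<noteq> {}" using p_pos by (metis One_nat_def Suc_le_eq empty_iff lessThan_iff)
  have nne: "{..<n} \<noteq> {}" using n_pos by (metis One_nat_def Suc_le_eq empty_iff lessThan_iff)
  have "A \<in> a ` {..<p}" unfolding A_def using pne by (intro Max_in) auto
  then obtain i0 where i0: "i0 < p" "a i0 = A" by auto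
  have Age: "\<forall>i<p. a i \<le> A" unfolding A_def by auto
  have "B \<in> b ` {..<n}" unfolding B_def using nne by (intro Max_in) auto
  then obtain j0 where j0: "j0 < n" "b j0 = B" by auto
  have Bge: "\<forall>j<n. b j \<le> B" unfolding B_def by auto
  have A0: "A > 0" using i0 a_pos by auto
  have B0: "B > 0" using j0 b_pos by auto
  define g where "g = (\<lambda>l. Gfun \<gamma> n b \<pi> (e l))"
  have gcont: "continuous_on {lstar<..} g"
    unfolding g_def Gfun_def
    by (intro continuous_intros e_cont) (use e_nopole in auto)
  define f1 where "f1 = (\<lambda>l. l - A * g l)"
  define f2 where "f2 = (\<lambda>l. 1 + \<gamma> * B * e l)"
  have f1c: "continuous_on {lstar<..} f1" unfolding f1_def by (intro continuous_intros gcont)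
  have f2c: "continuous_on {lstar<..} f2" unfolding f2_def by (intro continuous_intros e_cont)
  have f1nz: "\<forall>l>lstar. f1 l \<noteq> 0" unfolding f1_def g_def using e_ne i0 by force
  have f2nz: "\<forall>l>lstar. f2 l \<noteq> 0" unfolding f2_def using e_nopole j0 by force
  have K: "- T / (l - T) \<le> g l * e l \<and> g l * e l \<le> 0" if lT: "l > T" for l
  proof -
    let ?G = "g l"
    have nz: "\<And>i. i<p \<Longrightarrow> a i * ?G - l \<noteq> 0" using e_ne lT unfolding T_def g_def by force
    have el: "e l = (\<Sum>i<p. a i * \<omega> i / (a i * ?G - l))"
      using e_eq lT unfolding T_def g_def by blast
    have "?G * e l = ?G * (\<Sum>i<p. a i * \<omega> i / (a i * ?G - l))"
      using el by (rule arg_cong)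
    also have "\<dots> = (\<Sum>i<p. ?G * (a i * \<omega> i / (a i * ?G - l)))"
      by (rule sum_distrib_left)
    also have "\<dots> = (\<Sum>i<p. \<omega> i + l * (\<omega> i / (a i * ?G - l)))"
    proof (rule sum.cong[OF refl])
      fix i assume "i \<in> {..<p}"
      then have "a i * ?G - l \<noteq> 0" using nz by auto
      then show "?G * (a i * \<omega> i / (a i * ?G - l)) = \<omega> i + l * (\<omega> i / (a i * ?G - l))"
        by (simp add: field_simps)
    qed
    also have "\<dots> = 1 + l * stieltjes \<mu> l"
      using \<omega>_sum s_eq lT unfolding T_def g_def by (simp add: sum.distrib sum_distrib_left)
    finally have id: "?G * e l = 1 + l * stieltjes \<mu> l" .
    have sb: "- 1 / (l - T) \<le> stieltjes \<mu> l \<and> stieltjes \<mu> l \<le> - 1 / l"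
      using stieltjes_bounds[OF \<mu>_prob \<mu>_borel supp_nonneg supp_bdd lstar_def lstar_pos] lT
      unfolding T_def by auto
    have l0: "l > 0" "l - T > 0" using lT lstar_pos T_def by auto
    have "l * stieltjes \<mu> l \<le> -1" using sb l0 by (simp add: divide_simps mult.commute)
    moreover have "l * stieltjes \<mu> l \<ge> - l / (l - T)"
      using sb l0 mult_left_mono[of "- 1 / (l - T)" "stieltjes \<mu> l" l] by simp
    moreover have "- l / (l - T) + 1 = - T / (l - T)" using l0 by (simp add: field_simps)
    ultimately show ?thesis using id by linarith
  qed
  have T0: "T > 0" using lstar_pos T_def by simp
  have gB: "\<gamma> * B > 0" using \<gamma>_pos B0 by simp
  have sumaw: "(\<Sum>i<p. a i * \<omega> i) \<le> A"
  proof -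
    have "(\<Sum>i<p. a i * \<omega> i) \<le> (\<Sum>i<p. A * \<omega> i)"
      by (rule sum_mono) (use Age \<omega>_pos in \<open>auto intro: mult_right_mono\<close>)
    also have "\<dots> = A" using \<omega>_sum by (simp add: sum_distrib_left[symmetric])
    finally show ?thesis .
  qed
  define l0 where "l0 = 2*T + 2*A*\<gamma>*B + 2*A*B"
  have ABpos: "A*\<gamma>*B > 0" "A * B > 0" using A0 B0 \<gamma>_pos by auto
  have l0T: "l0 > T" "l0 - T \<ge> T" "l0 - T \<ge> 2*A*\<gamma>*B" "l0 \<ge> 2*A*\<gamma>*B" "l0 \<ge> 2*A*B" "l0 > 0"
    unfolding l0_def using T0 ABpos by auto
  have l0l: "l0 > lstar" using l0T T_def by simp
  have Kl0: "- T / (l0 - T) \<le> g l0 * e l0" "g l0 * e l0 \<le> 0" using K[OF l0T(1)] by auto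
  have Kl0': "(l0 - T) * (g l0 * (- e l0)) \<le> T"
  proof -
    have "- T \<le> (l0 - T) * (g l0 * e l0)" using Kl0(1) l0T(1) by (simp add: divide_simps mult.commute)
    then show ?thesis by simp
  qed
  have f2pos: "f2 l0 > 0"
  proof (rule ccontr)
    assume "\<not> f2 l0 > 0"
    then have "f2 l0 < 0" using f2nz l0l by force
    then have gBE: "\<gamma> * B * (- e l0) > 1" unfolding f2_def by simp
    have E0: "e l0 < 0"
    proof (rule ccontr)
      assume "\<not> e l0 < 0"
      then have "\<gamma>*B*(-e l0) \<le> 0" using gB by (intro mult_nonneg_nonpos) auto
      then show False using gBE by simp
    qed
    have G0: "g l0 \<ge> 0"
    proof (rule ccontr)
      assume "\<not> g l0 \<ge> 0"
      then have "g l0 * e l0 > 0" using E0 by (intro mult_neg_neg) auto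
      then show False using Kl0(2) by simp
    qed
    have "(l0 - T) * g l0 \<le> (l0 - T) * g l0 * (\<gamma> * B * (- e l0))"
      using mult_left_mono[of 1 "\<gamma> * B * (- e l0)" "(l0 - T) * g l0"] gBE G0 l0T by simp
    also have "\<dots> = \<gamma> * B * ((l0 - T) * (g l0 * (- e l0)))" by simp
    also have "\<dots> \<le> \<gamma> * B * T" using mult_left_mono[OF Kl0', of "\<gamma> * B"] gB by simp
    finally have h1: "(l0 - T) * g l0 \<le> \<gamma> * B * T" .
    have "A * g l0 * (2*A*\<gamma>*B) \<le> A * g l0 * (l0 - T)"
      using l0T A0 G0 by (intro mult_left_mono) auto
    also have "\<dots> \<le> A * (\<gamma> * B * T)" using mult_left_mono[OF h1, of A] A0 by (simp add: algebra_simps)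
    finally have "(2 * (A * g l0)) * (A*\<gamma>*B) \<le> T * (A*\<gamma>*B)" by (simp add: algebra_simps)
    then have "2 * (A * g l0) \<le> T" using ABpos(1) by (rule mult_right_le_imp_le)
    then have AG: "A * g l0 \<le> l0 / 2" using l0T by simp
    have trm: "l0 * (a i * \<omega> i / (a i * g l0 - l0)) \<ge> - 2 * (A * \<omega> i)" if i: "i < p" for i
    proof -
      have ai: "a i > 0" "\<omega> i > 0" "a i \<le> A" using a_pos \<omega>_pos Age i by auto
      have "a i * g l0 \<le> A * g l0" using ai G0 by (simp add: mult_right_mono)
      then have x: "a i * g l0 - l0 \<le> - l0 / 2" using AG by simp
      have xneg: "a i * g l0 - l0 < 0" using x l0T by simp
      have c: "a i * \<omega> i > 0" using ai by simp
      have "l0 \<le> - 2 * (a i * g l0 - l0)" using x by simp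
      then have "(a i * \<omega> i) * l0 \<le> (a i * \<omega> i) * (- 2 * (a i * g l0 - l0))"
        using c by (intro mult_left_mono) auto
      then have "l0 * (a i * \<omega> i) \<le> - 2 * (a i * \<omega> i) * (a i * g l0 - l0)"
        by (simp add: algebra_simps)
      then have "- 2 * (a i * \<omega> i) \<le> l0 * (a i * \<omega> i / (a i * g l0 - l0))"
        using xneg by (simp add: divide_simps mult.commute)
      moreover have "- 2 * (A * \<omega> i) \<le> - 2 * (a i * \<omega> i)" using ai by (simp add: mult_right_mono)
      ultimately show ?thesis by linarith
    qed
    have el0: "e l0 = (\<Sum>i<p. a i * \<omega> i / (a i * g l0 - l0))"
      using e_eq l0l unfolding g_def by blast
    have "l0 * e l0 = (\<Sum>i<p. l0 * (a i * \<omega> i / (a i * g l0 - l0)))"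
      unfolding el0 by (rule sum_distrib_left)
    also have "\<dots> \<ge> (\<Sum>i<p. - 2 * (A * \<omega> i))" by (rule sum_mono) (use trm in auto)
    finally have s1: "l0 * e l0 \<ge> (\<Sum>i<p. - 2 * (A * \<omega> i))" .
    have "(\<Sum>i<p. - 2 * (A * \<omega> i)) = - 2 * A * (\<Sum>i<p. \<omega> i)"
      by (simp add: sum_distrib_left sum_negf mult.assoc)
    then have "l0 * e l0 \<ge> - 2 * A" using s1 \<omega>_sum by simp
    then have "l0 * (- e l0) \<le> 2 * A" by simp
    then have "\<gamma> * B * (l0 * (- e l0)) \<le> \<gamma> * B * (2 * A)" using gB by (intro mult_left_mono) auto
    also have "\<dots> \<le> l0" using l0T by (simp add: algebra_simps)
    finally have "l0 * (\<gamma> * B * (- e l0)) \<le> l0 * 1" by (simp add: algebra_simps)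
    then have "\<gamma> * B * (- e l0) \<le> 1" using l0T(6) by (rule mult_left_le_imp_le)
    then show False using gBE by simp
  qed
  have f1pos: "f1 l0 > 0"
  proof (rule ccontr)
    assume "\<not> f1 l0 > 0"
    then have "f1 l0 < 0" using f1nz l0l by force
    then have AG: "A * g l0 > l0" unfolding f1_def by simp
    then have G0: "g l0 > 0" using A0 l0T zero_less_mult_pos[of A "g l0"] by simp
    have E0: "- e l0 \<ge> 0"
    proof (rule ccontr)
      assume "\<not> - e l0 \<ge> 0"
      then have "g l0 * e l0 > 0" using G0 by (intro mult_pos_pos) auto
      then show False using Kl0(2) by simp
    qed
    have gE: "0 \<le> g l0 * (- e l0)" by (rule mult_nonneg_nonneg) (use G0 E0 in auto)
    have "T * (g l0 * (- e l0)) \<le> (l0 - T) * (g l0 * (- e l0))"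
      using l0T(2) gE by (rule mult_right_mono)
    then have "T * (g l0 * (- e l0)) \<le> T * 1" using Kl0' by simp
    then have h: "g l0 * (- e l0) \<le> 1" using T0 by (rule mult_left_le_imp_le)
    have "l0 * (- e l0) \<le> A * g l0 * (- e l0)" using mult_right_mono[OF less_imp_le[OF AG] E0] .
    also have "\<dots> \<le> A" using mult_left_mono[OF h, of A] A0 by (simp add: mult.assoc)
    finally have h2: "l0 * (- e l0) \<le> A" .
    have "l0 * (2 * \<gamma> * B * (- e l0)) = 2 * \<gamma> * B * (l0 * (- e l0))" by simp
    also have "\<dots> \<le> 2 * \<gamma> * B * A" using mult_left_mono[OF h2, of "2 * \<gamma> * B"] gB by (simp add: mult.commute mult.left_commute)
    also have "\<dots> \<le> l0 * 1" using l0T by (simp add: algebra_simps)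
    finally have "l0 * (2 * \<gamma> * B * (- e l0)) \<le> l0 * 1" .
    then have h3: "2 * \<gamma> * B * (- e l0) \<le> 1" using l0T(6) by (rule mult_left_le_imp_le)
    have trm: "b j * \<pi> j / (1 + \<gamma> * b j * e l0) \<le> 2 * B * \<pi> j" if j: "j < n" for j
    proof -
      have bj: "b j > 0" "\<pi> j > 0" "b j \<le> B" using b_pos \<pi>_pos Bge j by auto
      have "\<gamma> * b j * (- e l0) \<le> \<gamma> * B * (- e l0)"
        using mult_right_mono[OF mult_left_mono[OF bj(3) less_imp_le[OF \<gamma>_pos]] E0] .
      then have d: "1 + \<gamma> * b j * e l0 \<ge> 1/2" using h3 by simp
      have "b j * \<pi> j / (1 + \<gamma> * b j * e l0) \<le> b j * \<pi> j / (1/2)"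
        using d bj by (intro divide_left_mono) auto
      also have "\<dots> \<le> 2 * B * \<pi> j" using bj by (simp add: mult_right_mono)
      finally show ?thesis .
    qed
    have "g l0 \<le> (\<Sum>j<n. 2 * B * \<pi> j)"
      unfolding g_def Gfun_def by (rule sum_mono) (use trm in auto)
    also have "\<dots> = 2 * B" using \<pi>_sum by (simp add: sum_distrib_left[symmetric])
    finally have "A * g l0 \<le> A * (2 * B)" using A0 by simp
    then show False using AG l0T by simp
  qed
  have f1l: "f1 l > 0" by (rule sign_const[OF f1c f1nz l0l l_gt f1pos])
  have f2l: "f2 l > 0" by (rule sign_const[OF f2c f2nz l0l l_gt f2pos])
  have c1: "Gfun \<gamma> n b \<pi> (e l) < l / A"
    using f1l A0 unfolding f1_def g_def by (simp add: pos_less_divide_eq mult.commute)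
  have c2: "e l > - 1 / (\<gamma> * B)"
  proof -
    have "\<gamma> * B * e l > -1" using f2l unfolding f2_def by simp
    then show ?thesis using gB by (simp add: divide_simps mult.commute)
  qed
  have c3: "e l < 0"
  proof -
    have neg: "a i * \<omega> i / (a i * g l - l) < 0" if i: "i < p" for i
    proof -
      have ai: "a i > 0" "\<omega> i > 0" "a i \<le> A" using a_pos \<omega>_pos Age i by auto
      have "a i * g l < l"
      proof (cases "g l \<ge> 0")
        case True
        then have "a i * g l \<le> A * g l" using ai by (simp add: mult_right_mono)
        then show ?thesis using f1l unfolding f1_def by simp
      next
        case False
        then have "a i * g l < 0" using ai by (simp add: mult_pos_neg)
        then show ?thesis using l_gt lstar_pos by simp
      qed
      then show ?thesis using ai by (simp add: divide_pos_neg)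
    qed
    have el: "e l = (\<Sum>i<p. a i * \<omega> i / (a i * g l - l))"
      using e_eq l_gt unfolding g_def by blast
    have "(\<Sum>i<p. a i * \<omega> i / (a i * g l - l)) < (\<Sum>i<p. 0)"
      by (rule sum_strict_mono) (use pne neg in auto)
    then show ?thesis using el by simp
  qed
  show ?thesis using c1 c2 c3 unfolding Ilam_def A_def B_def by auto
qed

end
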